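(* In the setting described in the context, assume $n_0-d(k_0)>4$. For each $\delta>0$ there exists a constant $\gamma_\delta>0$ such that when $\lambda\in\big[\gamma_\delta\sigma_0^2/(\sqrt{1+\frac23\gamma_\delta^{1/4}}-1),\ n_0\gamma_\delta^{1/4}\frac{C_{\min}}{6}\big]$, $$\mathbb P(k_0\notin\mathcal S_B)\le\Big(1-\frac{\gamma_\delta^{n_0-1}}{n_0-1}\Big)^B+\delta.$$
   Context: Let $n_0\ge1$, $n\ge0$ be integers. For each $k\in\{0,\dots,n\}$, $\mathbf X_k\in\{0,1\}^{n_0\times d(k)}$ has standard basis row vectors as rows and nonzero columns (indicators of a partition of $\{1,\dots,n_0\}$ into $d(k)$ blocks), the partition for $k+1$ refining that for $k$. Observation: $\mathbf Y=\mathbf X_{k_0}\boldsymbol\beta^0+\sigma_0\mathbf U$, $\mathbf U\sim\mathcal N(0,\mathbf I_{n_0})$, $k_0\in\{0,\dots,n\}$, $\boldsymbol\beta^0\in\mathbb R^{d(k_0)}$, $\sigma_0>0$, where $k_0$ is the smallest $k$ with $\mathbf X_k\boldsymbol\beta=\mathbf X_{k_0}\boldsymbol\beta^0$ for some $\boldsymbol\beta$. $C_{\min}=\min_{0\le k<k_0}\inf_{\boldsymbol\beta\in\mathbb R^{d(k)}}\|\mathbf X_{k_0}\boldsymbol\beta^0-\mathbf X_k\boldsymbol\beta\|_2^2/(n_0(k_0-k))$. Candidate set: $\mathbf U^*_1,\dots,\mathbf U^*_B$ i.i.d. $\mathcal N(0,\mathbf I_{n_0})$ independent of $\mathbf U$;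 $\hat k_b$ minimizes over $k\in\{0,\dots,n\}$ the value $\min_{\boldsymbol\beta\in\mathbb R^{d(k)},\sigma\in\mathbb R}\{\|\mathbf Y-\mathbf X_k\boldsymbol\beta-\sigma\mathbf U^*_b\|_2^2+\lambda k\}$; $\mathcal S_B=\{\hat k_1,\dots,\hat k_B\}$. *)

theory Defs
  imports "HOL-Probability.Probability"
begin

text \<open>Vectors in R^m are functions nat => real, only indices < m matter.
  The design X_k (rows = standard basis vectors) is encoded by its label function g k:
  row i of X_k is the basis vector e_(g k i), so (X_k beta)_i = beta (g k i).\<close>

definition sqnorm :: "nat \<Rightarrow> (nat \<Rightarrow> real) \<Rightarrow> real" where
  "sqnorm m v = (\<Sum>i<m. (v i)^2)"

definition Xmul :: "(nat \<Rightarrow> nat \<Rightarrow> nat) \<Rightarrow> nat \<Rightarrow> (nat \<Rightarrow> real) \<Rightarrow> nat \<Rightarrow> real" where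
  "Xmul g k \<beta> i = \<beta> (g k i)"

text \<open>Nested partition designs: X_k is n0 x d(k), every row a standard basis vector,
  no zero column, partition of k+1 refines that of k.\<close>
definition nested_designs :: "nat \<Rightarrow> nat \<Rightarrow> (nat \<Rightarrow> nat) \<Rightarrow> (nat \<Rightarrow> nat \<Rightarrow> nat) \<Rightarrow> bool" where
  "nested_designs n0 n d g \<longleftrightarrow>
     (\<forall>k\<le>n. g k ` {..<n0} = {..<d k}) \<and>
     (\<forall>k<n. \<forall>i<n0. \<forall>j<n0. g (Suc k) i = g (Suc k) j \<longrightarrow> g k i = g k j)"

definition minimal_k0 :: "nat \<Rightarrow> (nat \<Rightarrow> nat \<Rightarrow> nat) \<Rightarrow> nat \<Rightarrow> (nat \<Rightarrow> real) \<Rightarrow> bool" where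
  "minimal_k0 n0 g k0 \<beta>0 \<longleftrightarrow>
     (\<forall>k<k0. \<not> (\<exists>\<beta>. \<forall>i<n0. Xmul g k \<beta> i = Xmul g k0 \<beta>0 i))"

text \<open>C_min (only meaningful for k0 > 0; for k0 = 0 it is the empty minimum = +infinity).\<close>
definition Cmin :: "nat \<Rightarrow> (nat \<Rightarrow> nat \<Rightarrow> nat) \<Rightarrow> nat \<Rightarrow> (nat \<Rightarrow> real) \<Rightarrow> real" where
  "Cmin n0 g k0 \<beta>0 = Min ((\<lambda>k. (INF \<beta>. sqnorm n0 (\<lambda>i. Xmul g k0 \<beta>0 i - Xmul g k \<beta> i))
                                 / (real n0 * real (k0 - k))) ` {..<k0})"

definition obj :: "nat \<Rightarrow> (nat \<Rightarrow> nat \<Rightarrow> nat) \<Rightarrow> real \<Rightarrow> (nat \<Rightarrow> real) \<Rightarrow> (nat \<Rightarrow> real) \<Rightarrow> nat \<Rightarrow> real" where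
  "obj n0 g lam Y Us k =
     (INF p\<in>(UNIV :: ((nat \<Rightarrow> real) \<times> real) set).
        sqnorm n0 (\<lambda>i. Y i - Xmul g k (fst p) i - snd p * Us i)) + lam * real k"

definition khat :: "nat \<Rightarrow> nat \<Rightarrow> (nat \<Rightarrow> nat \<Rightarrow> nat) \<Rightarrow> real \<Rightarrow> (nat \<Rightarrow> real) \<Rightarrow> (nat \<Rightarrow> real) \<Rightarrow> nat" where
  "khat n0 n g lam Y Us = (LEAST k. k \<le> n \<and> (\<forall>k'\<le>n. obj n0 g lam Y Us k \<le> obj n0 g lam Y Us k'))"

text \<open>Sample space: omega (0,i) = U_i, omega (b,i) = U*_b i for 1 <= b <= B, all i.i.d. N(0,1).\<close>
definition gauss_space :: "nat \<Rightarrow> nat \<Rightarrow> ((nat \<times> nat) \<Rightarrow> real) measure" where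
  "gauss_space n0 B = PiM ({..B} \<times> {..<n0}) (\<lambda>_. density lborel std_normal_density)"

definition Yobs :: "nat \<Rightarrow> (nat \<Rightarrow> nat \<Rightarrow> nat) \<Rightarrow> nat \<Rightarrow> (nat \<Rightarrow> real) \<Rightarrow> real \<Rightarrow> ((nat \<times> nat) \<Rightarrow> real) \<Rightarrow> nat \<Rightarrow> real" where
  "Yobs n0 g k0 \<beta>0 \<sigma>0 \<omega> i = Xmul g k0 \<beta>0 i + \<sigma>0 * \<omega> (0, i)"

definition miss_event :: "nat \<Rightarrow> nat \<Rightarrow> (nat \<Rightarrow> nat \<Rightarrow> nat) \<Rightarrow> nat \<Rightarrow> (nat \<Rightarrow> real) \<Rightarrow> real \<Rightarrow> real \<Rightarrow> nat \<Rightarrow> ((nat \<times> nat) \<Rightarrow> real) set" where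
  "miss_event n0 n g k0 \<beta>0 \<sigma>0 lam B =
     {\<omega> \<in> space (gauss_space n0 B).
        k0 \<notin> (\<lambda>b. khat n0 n g lam (Yobs n0 g k0 \<beta>0 \<sigma>0 \<omega>) (\<lambda>i. \<omega> (b, i))) ` {1..B}}"

end

theory Submission
  imports Defs
begin

definition NN :: "real measure" where "NN = density lborel std_normal_density"

lemma prob_NN: "prob_space NN"
  unfolding NN_def using real_dist_normal_dist by (simp add: real_distribution_def)

interpretation NNp: prob_space NN by (rule prob_NN)

interpretation PS: product_sigma_finite "\<lambda>_::nat\<times>nat. NN"
  unfolding product_sigma_finite_def using NNp.sigma_finite_measure_axioms by simp

lemma sets_NN[simp, measurable_cong]: "sets NN = sets borel"
  unfolding NN_def by simp

lemma space_NN[simp]: "space NN = UNIV"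
  unfolding NN_def by simp

lemma gauss_eq: "gauss_space n0 B = PiM ({..B} \<times> {..<n0}) (\<lambda>_. NN)"
  unfolding gauss_space_def NN_def by simp

lemma prob_PiM: "prob_space (PiM K (\<lambda>_::nat\<times>nat. NN))"
  by (rule prob_space_PiM) (rule prob_NN)

lemma split_emeasure:
  fixes K I J :: "(nat \<times> nat) set"
  assumes "I \<inter> J = {}" "finite I" "finite J" "K = I \<union> J"
    and A: "A \<in> sets (PiM K (\<lambda>_. NN))"
  shows "emeasure (PiM K (\<lambda>_. NN)) A =
    (\<integral>\<^sup>+ x. emeasure (PiM J (\<lambda>_. NN)) {y \<in> space (PiM J (\<lambda>_. NN)). merge I J (x, y) \<in> A} \<partial>PiM I (\<lambda>_. NN))"
proof -
  have A': "A \<in> sets (PiM (I \<union> J) (\<lambda>_. NN))" using A assms(4) by simp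
  have "emeasure (PiM K (\<lambda>_. NN)) A = (\<integral>\<^sup>+ z. indicator A z \<partial>PiM (I \<union> J) (\<lambda>_. NN))"
    using A assms(4) by simp
  also have "\<dots> = (\<integral>\<^sup>+ x. (\<integral>\<^sup>+ y. indicator A (merge I J (x, y)) \<partial>PiM J (\<lambda>_. NN)) \<partial>PiM I (\<lambda>_. NN))"
    using A' assms by (intro PS.product_nn_integral_fold) auto
  also have "\<dots> = (\<integral>\<^sup>+ x. emeasure (PiM J (\<lambda>_. NN)) {y \<in> space (PiM J (\<lambda>_. NN)). merge I J (x, y) \<in> A} \<partial>PiM I (\<lambda>_. NN))"
  proof (intro nn_integral_cong)
    fix x assume x: "x \<in> space (PiM I (\<lambda>_. NN))"
    have meas: "(\<lambda>y. merge I J (x, y)) \<in> measurable (PiM J (\<lambda>_. NN)) (PiM (I \<union> J) (\<lambda>_. NN))"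
      using measurable_Pair2[OF measurable_merge x] by simp
    have S: "{y \<in> space (PiM J (\<lambda>_. NN)). merge I J (x, y) \<in> A} \<in> sets (PiM J (\<lambda>_. NN))"
      using measurable_sets[OF meas A'] by (simp add: vimage_def Int_def conj_commute)
    have "(\<integral>\<^sup>+ y. indicator A (merge I J (x, y)) \<partial>PiM J (\<lambda>_. NN)) =
          (\<integral>\<^sup>+ y. indicator {y \<in> space (PiM J (\<lambda>_. NN)). merge I J (x, y) \<in> A} y \<partial>PiM J (\<lambda>_. NN))"
      by (intro nn_integral_cong) (auto simp: indicator_def)
    also have "\<dots> = emeasure (PiM J (\<lambda>_. NN)) {y \<in> space (PiM J (\<lambda>_. NN)). merge I J (x, y) \<in> A}"
      using S by simp
    finally show "(\<integral>\<^sup>+ y. indicator A (merge I J (x, y)) \<partial>PiM J (\<lambda>_. NN)) = \<dots>" .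
  qed
  finally show ?thesis .
qed

lemma sqnorm_L2: "sqnorm m v = (L2_set v {..<m})^2"
  unfolding sqnorm_def L2_set_def by (simp add: sum_nonneg)

lemma L2_scale: "L2_set (\<lambda>i. c * f i) A = \<bar>c\<bar> * L2_set f A"
  unfolding L2_set_def
  by (simp add: power_mult_distrib real_sqrt_mult flip: sum_distrib_left)

lemma L2_comp: "finite A \<Longrightarrow> i \<in> A \<Longrightarrow> \<bar>f i\<bar> \<le> L2_set f A"
proof -
  assume "finite A" "i \<in> A"
  have "(f i)^2 \<le> (\<Sum>j\<in>A. (f j)^2)"
    using \<open>finite A\<close> \<open>i \<in> A\<close> by (intro member_le_sum) auto
  then have "sqrt ((f i)^2) \<le> sqrt (\<Sum>j\<in>A. (f j)^2)" by (rule real_sqrt_le_mono)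
  then show ?thesis by (simp add: L2_set_def)
qed

lemma L2_tri3: "L2_set (\<lambda>i. f i + g i + h i) A \<le> L2_set f A + L2_set g A + L2_set h A"
proof -
  have "L2_set (\<lambda>i. f i + g i + h i) A \<le> L2_set (\<lambda>i. f i + g i) A + L2_set h A"
    by (rule L2_set_triangle_ineq)
  also have "\<dots> \<le> L2_set f A + L2_set g A + L2_set h A"
    using L2_set_triangle_ineq[of f g A] by simp
  finally show ?thesis .
qed

lemma core:
  fixes r U W :: "nat \<Rightarrow> real"
  assumes L: "0 < L" "L \<le> L2_set r {..<m}" and rij: "r i0 = r j0"
    and ij: "i0 < m" "j0 < m" "i0 \<noteq> j0"
    and U: "L2_set U {..<m} \<le> R" "1 \<le> R" "s \<le> \<bar>U i0 - U j0\<bar>" "6*t*R \<le> s"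
    and t: "0 < t" "t \<le> 1" and W: "L2_set W {..<m} \<le> t^3/2"
    and s0: "0 \<le> \<sigma>0" "18 * t^4 * \<sigma>0^2 \<le> L^2"
  shows "t*L/2 \<le> L2_set (\<lambda>i. r i + \<sigma>0 * U i - \<sigma> * (U i + W i)) {..<m}"
proof -
  define z where "z = (\<lambda>i. r i + \<sigma>0 * U i - \<sigma> * (U i + W i))"
  define a where "a = \<sigma>0 - \<sigma>"
  have st: "\<sigma>0 * t^2 \<le> L/4"
  proof (rule power2_le_imp_le)
    have "(\<sigma>0 * t^2)^2 = \<sigma>0^2 * t^4" by (simp add: power_mult_distrib flip: power_mult)
    also have "\<dots> \<le> L^2/18" using s0 by (simp add: mult_ac)
    also have "\<dots> \<le> (L/4)^2" by (simp add: power_divide)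
    finally show "(\<sigma>0 * t^2)^2 \<le> (L/4)^2" .
  qed (use L in simp)
  have t3: "t^3 \<le> t" "t^3 \<le> 1" "0 < t^3"
    using t by (auto simp: power_le_one power_decreasing[of 1 3 t, simplified])
  have st3: "\<sigma>0 * t^3 \<le> L*t/4"
  proof -
    have "\<sigma>0 * t^3 = (\<sigma>0 * t^2) * t" by (simp add: power3_eq_cube power2_eq_square)
    also have "\<dots> \<le> (L/4) * t" using st t by (intro mult_right_mono) auto
    finally show ?thesis by simp
  qed
  have nW: "0 \<le> L2_set W {..<m}" "0 \<le> L2_set U {..<m}" by (auto intro: L2_set_nonneg)
  have sig: "\<bar>\<sigma>\<bar> \<le> \<sigma>0 + \<bar>a\<bar>" unfolding a_def using s0 by linarith
  show ?thesis
  proof (cases "\<bar>a\<bar> \<le> L/(4*R)")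
    case True
    have req: "r = (\<lambda>i. z i + (- a) * U i + \<sigma> * W i)"
      unfolding z_def a_def by (auto simp: algebra_simps)
    have "L \<le> L2_set (\<lambda>i. z i + (- a) * U i + \<sigma> * W i) {..<m}" using L req by simp
    also have "\<dots> \<le> L2_set z {..<m} + L2_set (\<lambda>i. (- a) * U i) {..<m} + L2_set (\<lambda>i. \<sigma> * W i) {..<m}"
      by (rule L2_tri3)
    also have "\<dots> = L2_set z {..<m} + \<bar>a\<bar> * L2_set U {..<m} + \<bar>\<sigma>\<bar> * L2_set W {..<m}"
      by (simp only: L2_scale abs_minus_cancel)
    finally have 1: "L \<le> L2_set z {..<m} + \<bar>a\<bar> * L2_set U {..<m} + \<bar>\<sigma>\<bar> * L2_set W {..<m}" .
    have "\<bar>a\<bar> * L2_set U {..<m} \<le> L/(4*R) * R"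
      using True U nW by (intro mult_mono) auto
    also have "\<dots> = L/4" using U by simp
    finally have 2: "\<bar>a\<bar> * L2_set U {..<m} \<le> L/4" .
    have "\<bar>\<sigma>\<bar> * L2_set W {..<m} \<le> (\<sigma>0 + L/(4*R)) * (t^3/2)"
      using sig True W nW by (intro mult_mono) auto
    also have "\<dots> = \<sigma>0 * t^3 / 2 + (L/(4*R)) * (t^3/2)" by (simp add: algebra_simps)
    also have "\<dots> \<le> L/8 + L/8"
    proof (intro add_mono)
      have "L*t \<le> L" using t L by (intro mult_left_le) auto
      then show "\<sigma>0 * t^3 / 2 \<le> L/8" using st3 by linarith
      have "(L/(4*R)) * (t^3/2) \<le> (L/4) * (1/2)"
        using U L t3 by (intro mult_mono) (auto simp: field_simps)
      then show "(L/(4*R)) * (t^3/2) \<le> L/8" by simp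
    qed
    finally have 3: "\<bar>\<sigma>\<bar> * L2_set W {..<m} \<le> L/4" by simp
    have "L/2 \<le> L2_set z {..<m}" using 1 2 3 by linarith
    moreover have "t*L/2 \<le> L/2" using t L by (simp add: mult_left_le_one_le)
    ultimately show ?thesis unfolding z_def by linarith
  next
    case False
    have zd: "z i0 - z j0 = a * (U i0 - U j0) - \<sigma> * (W i0 - W j0)"
      unfolding z_def a_def using rij by (simp add: algebra_simps)
    have Wi: "\<bar>W i0\<bar> \<le> t^3/2" "\<bar>W j0\<bar> \<le> t^3/2"
      using L2_comp[of "{..<m}" i0 W] L2_comp[of "{..<m}" j0 W] ij W by auto
    have "\<bar>\<sigma> * (W i0 - W j0)\<bar> \<le> (\<sigma>0 + \<bar>a\<bar>) * t^3"
    proof -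
      have "\<bar>\<sigma> * (W i0 - W j0)\<bar> = \<bar>\<sigma>\<bar> * \<bar>W i0 - W j0\<bar>" by (simp add: abs_mult)
      also have "\<dots> \<le> (\<sigma>0 + \<bar>a\<bar>) * t^3" using sig Wi by (intro mult_mono) auto
      finally show ?thesis .
    qed
    moreover have "\<bar>a\<bar> * s \<le> \<bar>a * (U i0 - U j0)\<bar>"
      using U by (simp add: abs_mult mult_left_mono)
    ultimately have "\<bar>a\<bar> * s - (\<sigma>0 + \<bar>a\<bar>) * t^3 \<le> \<bar>z i0 - z j0\<bar>"
      unfolding zd by linarith
    moreover have "\<bar>a\<bar> * s - (\<sigma>0 + \<bar>a\<bar>) * t^3 = \<bar>a\<bar> * (s - t^3) - \<sigma>0 * t^3"
      by (simp add: algebra_simps)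
    moreover have "5*t*L/4 \<le> \<bar>a\<bar> * (s - t^3)"
    proof -
      have "t \<le> t*R" using U t by (intro mult_le_cancel_left1[THEN iffD2]) auto
      then have "5*t*R \<le> s - t^3" using U t3 by linarith
      have "5*t*L/4 = (L/(4*R)) * (5*t*R)" using U by (simp add: field_simps)
      also have "\<dots> \<le> \<bar>a\<bar> * (s - t^3)"
        using False \<open>5*t*R \<le> s - t^3\<close> t U L by (intro mult_mono) auto
      finally show ?thesis .
    qed
    ultimately have zz: "t*L \<le> \<bar>z i0 - z j0\<bar>" using st3 mult.commute[of L t] by linarith
    have "(t*L)^2 \<le> (\<bar>z i0 - z j0\<bar>)^2"
      by (rule power_mono) (use zz t L in auto)
    then have "(t*L)^2/2 \<le> (z i0 - z j0)^2/2" by simp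
    also have "\<dots> \<le> (z i0)^2 + (z j0)^2"
    proof -
      have "(z i0 - z j0)^2 + (z i0 + z j0)^2 = 2*((z i0)^2 + (z j0)^2)"
        by (simp add: power2_eq_square algebra_simps)
      then have "(z i0 - z j0)^2 \<le> 2*((z i0)^2 + (z j0)^2)" using zero_le_power2[of "z i0 + z j0"] by linarith
      then show ?thesis by (simp add: divide_le_eq mult.commute)
    qed
    also have "\<dots> = (\<Sum>i\<in>{i0,j0}. (z i)^2)" using ij by simp
    also have "\<dots> \<le> (\<Sum>i<m. (z i)^2)" using ij by (intro sum_mono2) auto
    finally have X: "(t*L)^2/2 \<le> (\<Sum>i<m. (z i)^2)" .
    have "(t*L/2)^2 = (t*L)^2/4" by (simp add: power_divide)
    then have "(t*L/2)^2 \<le> (\<Sum>i<m. (z i)^2)" using X zero_le_power2[of "t*L"] by linarith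
    then have "sqrt ((t*L/2)^2) \<le> L2_set z {..<m}"
      unfolding L2_set_def by (rule real_sqrt_le_mono)
    then show ?thesis using t L unfolding z_def by simp
  qed
qed

lemma Fnonneg: "0 \<le> sqnorm m v" unfolding sqnorm_def by (simp add: sum_nonneg)

lemma obj_bdd: "bdd_below ((\<lambda>p. sqnorm n0 (\<lambda>i. Y i - Xmul g k (fst p) i - snd p * Us i)) ` UNIV)"
  by (rule bdd_belowI[of _ 0]) (auto simp: Fnonneg)

lemma obj_ge: "lam * real k \<le> obj n0 g lam Y Us k"
proof -
  have "0 \<le> (INF p\<in>(UNIV :: ((nat \<Rightarrow> real) \<times> real) set).
        sqnorm n0 (\<lambda>i. Y i - Xmul g k (fst p) i - snd p * Us i))"
    by (rule cINF_greatest) (auto simp: Fnonneg)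
  then show ?thesis unfolding obj_def by simp
qed

lemma obj_le: "obj n0 g lam Y Us k \<le> sqnorm n0 (\<lambda>i. Y i - Xmul g k \<beta> i - \<sigma> * Us i) + lam * real k"
proof -
  have "(INF p\<in>(UNIV :: ((nat \<Rightarrow> real) \<times> real) set).
        sqnorm n0 (\<lambda>i. Y i - Xmul g k (fst p) i - snd p * Us i)) \<le>
        sqnorm n0 (\<lambda>i. Y i - Xmul g k (fst (\<beta>,\<sigma>)) i - snd (\<beta>,\<sigma>) * Us i)"
    by (rule cINF_lower[OF obj_bdd]) simp
  then show ?thesis unfolding obj_def by simp
qed

lemma obj_ge2:
  assumes "\<And>\<beta> \<sigma>. c \<le> sqnorm n0 (\<lambda>i. Y i - Xmul g k \<beta> i - \<sigma> * Us i)"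
  shows "c + lam * real k \<le> obj n0 g lam Y Us k"
proof -
  have "c \<le> (INF p\<in>(UNIV :: ((nat \<Rightarrow> real) \<times> real) set).
        sqnorm n0 (\<lambda>i. Y i - Xmul g k (fst p) i - snd p * Us i))"
    by (rule cINF_greatest) (auto simp: assms)
  then show ?thesis unfolding obj_def by simp
qed

lemma L2_sum_bound:
  assumes "\<forall>i<m. \<bar>f i\<bar> \<le> c"
  shows "L2_set f {..<m} \<le> real m * c"
proof -
  have "L2_set f {..<m} \<le> (\<Sum>i<m. \<bar>f i\<bar>)" by (rule L2_set_le_sum_abs)
  also have "\<dots> \<le> (\<Sum>i<m. c)" using assms by (intro sum_mono) auto
  finally show ?thesis by simp
qed

lemma det_khat:
  fixes \<beta>0 U V :: "nat \<Rightarrow> real"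
  assumes k0n: "k0 \<le> n" and n0: "1 \<le> n0"
    and ij: "i0 < n0" "j0 < n0" "i0 \<noteq> j0" and gij: "\<forall>k\<le>k0. g k i0 = g k j0"
    and s0: "0 < \<sigma>0" and t: "0 < t" "t \<le> 1"
    and lamlo: "3 * t^6 * \<sigma>0^2 \<le> lam"
    and lamhi: "k0 = 0 \<or> lam \<le> real n0 * t^2 * Cmin n0 g k0 \<beta>0 / 6"
    and M: "1 \<le> M" "\<forall>i<n0. \<bar>U i\<bar> \<le> M" and s: "s \<le> \<bar>U i0 - U j0\<bar>" "6*t*(real n0 * M) \<le> s"
    and V: "\<forall>i<n0. \<bar>V i - U i\<bar> \<le> t^3/(2*real n0)"
  shows "khat n0 n g lam (\<lambda>i. Xmul g k0 \<beta>0 i + \<sigma>0 * U i) V = k0"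
proof -
  define Y where "Y = (\<lambda>i. Xmul g k0 \<beta>0 i + \<sigma>0 * U i)"
  define ob where "ob = obj n0 g lam Y V"
  have "0 < 3 * t^6 * \<sigma>0^2" using s0 t by simp
  then have lampos: "0 < lam" using lamlo by linarith
  define W where "W = (\<lambda>i. V i - U i)"
  have nW: "L2_set W {..<n0} \<le> t^3/2"
  proof -
    have "L2_set W {..<n0} \<le> real n0 * (t^3/(2*real n0))"
      using V unfolding W_def by (intro L2_sum_bound) auto
    also have "\<dots> = t^3/2" using n0 by simp
    finally show ?thesis .
  qed
  have nU: "L2_set U {..<n0} \<le> real n0 * M" using M by (intro L2_sum_bound) auto
  have R1: "1 \<le> real n0 * M" using M n0 by (metis mult_mono' of_nat_1 of_nat_le_iff mult_1 zero_le_one)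
  have ob0: "ob k0 \<le> \<sigma>0^2 * t^6/4 + lam * real k0"
  proof -
    have "ob k0 \<le> sqnorm n0 (\<lambda>i. Y i - Xmul g k0 \<beta>0 i - \<sigma>0 * V i) + lam * real k0"
      unfolding ob_def by (rule obj_le)
    also have "sqnorm n0 (\<lambda>i. Y i - Xmul g k0 \<beta>0 i - \<sigma>0 * V i) = (L2_set (\<lambda>i. (- \<sigma>0) * W i) {..<n0})^2"
      unfolding sqnorm_L2 Y_def W_def by (simp add: algebra_simps)
    also have "\<dots> = \<sigma>0^2 * (L2_set W {..<n0})^2" by (simp only: L2_scale) (simp add: power_mult_distrib)
    also have "\<dots> \<le> \<sigma>0^2 * (t^3/2)^2"
      by (intro mult_left_mono power_mono nW) (auto intro: L2_set_nonneg)
    also have "\<dots> = \<sigma>0^2 * t^6/4" by (simp add: power_divide flip: power_mult)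
    finally show ?thesis by simp
  qed
  have small: "\<sigma>0^2 * t^6/4 \<le> lam/12" using lamlo by (simp add: mult_ac)
  have gt: "ob k0 < ob k" if k: "k \<le> n" "k \<noteq> k0" for k
  proof (cases "k0 < k")
    case True
    have "lam * real k0 + lam \<le> lam * real k"
    proof -
      have "real k0 + 1 \<le> real k" using True by simp
      then have "lam * (real k0 + 1) \<le> lam * real k" using lampos by (intro mult_left_mono) auto
      then show ?thesis by (simp add: algebra_simps)
    qed
    moreover have "lam * real k \<le> ob k" unfolding ob_def by (rule obj_ge)
    ultimately show ?thesis using ob0 small lampos by linarith
  next
    case False
    then have kk: "k < k0" using k by simp
    then have k0nz: "k0 \<noteq> 0" by simp
    define D where "D = (INF \<beta>. sqnorm n0 (\<lambda>i. Xmul g k0 \<beta>0 i - Xmul g k \<beta> i))"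
    have Dle: "D \<le> sqnorm n0 (\<lambda>i. Xmul g k0 \<beta>0 i - Xmul g k \<beta> i)" for \<beta>
      unfolding D_def by (rule cINF_lower) (auto intro!: bdd_belowI[of _ 0] simp: Fnonneg)
    have "Cmin n0 g k0 \<beta>0 \<le> D / (real n0 * real (k0 - k))"
      unfolding Cmin_def D_def using kk by (intro Min_le) auto
    then have "real n0 * t^2 * Cmin n0 g k0 \<beta>0 \<le> real n0 * t^2 * (D / (real n0 * real (k0 - k)))"
      by (intro mult_left_mono) auto
    then have "lam \<le> real n0 * t^2 * (D / (real n0 * real (k0 - k))) / 6"
    proof -
      have "lam \<le> real n0 * t^2 * Cmin n0 g k0 \<beta>0 / 6" using lamhi k0nz by simp
      then show ?thesis using divide_right_mono[OF \<open>real n0 * t^2 * Cmin n0 g k0 \<beta>0 \<le> _\<close>, of 6] by (meson order_trans zero_le_numeral)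
    qed
    also have "\<dots> = t^2 * D / (6 * real (k0 - k))" using n0 by (simp add: field_simps)
    finally have "lam * (6 * real (k0 - k)) \<le> t^2 * D" using kk by (simp add: le_divide_eq)
    then have hl: "lam * real (k0 - k) \<le> t^2 * D / 6" by simp
    have k1: "1 \<le> real (k0 - k)" using kk by simp
    have lam_le: "lam \<le> lam * real (k0 - k)" using k1 lampos by simp
    have "0 < t^2 * D" using hl lam_le lampos by linarith
    then have Dpos: "0 < D" using t by (simp add: zero_less_mult_iff)
    have D18: "18 * t^4 * \<sigma>0^2 \<le> D"
    proof -
      have "3 * t^6 * \<sigma>0^2 \<le> t^2 * D / 6" using lamlo lam_le hl by linarith
      moreover have "t^2 * (18 * t^4 * \<sigma>0^2) = 6 * (3 * t^6 * \<sigma>0^2)"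
      proof -
        have "t^2 * t^4 = t^6" by (simp flip: power_add)
        have "t^2 * (18 * t^4 * \<sigma>0^2) = 18 * (t^2 * t^4) * \<sigma>0^2" by (simp only: mult_ac)
        with \<open>t^2 * t^4 = t^6\<close> show ?thesis by simp
      qed
      ultimately have "t^2 * (18 * t^4 * \<sigma>0^2) \<le> t^2 * D" by linarith
      then show ?thesis using t by simp
    qed
    define L where "L = sqrt D"
    have LL: "L^2 = D" "0 < L" using Dpos unfolding L_def by auto
    have bnd: "t^2 * D / 4 \<le> sqnorm n0 (\<lambda>i. Y i - Xmul g k \<beta> i - \<sigma> * V i)" for \<beta> \<sigma>
    proof -
      define r where "r = (\<lambda>i. Xmul g k0 \<beta>0 i - Xmul g k \<beta> i)"
      have "L \<le> L2_set r {..<n0}"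
        unfolding L_def r_def using Dle[of \<beta>] by (simp add: sqnorm_L2 real_le_lsqrt L2_set_nonneg)
      moreover have "r i0 = r j0" unfolding r_def Xmul_def using gij kk by simp
      ultimately have "t*L/2 \<le> L2_set (\<lambda>i. r i + \<sigma>0 * U i - \<sigma> * (U i + W i)) {..<n0}"
        using core[of L r n0 i0 j0 U "real n0 * M" s t W \<sigma>0 \<sigma>] LL ij nU M s t nW s0 D18 n0 R1
        by (simp add: mult_ac)
      moreover have "(\<lambda>i. r i + \<sigma>0 * U i - \<sigma> * (U i + W i)) = (\<lambda>i. Y i - Xmul g k \<beta> i - \<sigma> * V i)"
        unfolding r_def W_def Y_def by (auto simp: algebra_simps)
      ultimately have "(t*L/2)^2 \<le> (L2_set (\<lambda>i. Y i - Xmul g k \<beta> i - \<sigma> * V i) {..<n0})^2"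
        using t LL by (intro power_mono) auto
      then show ?thesis unfolding sqnorm_L2 using LL by (simp add: power_divide power_mult_distrib)
    qed
    have "t^2 * D / 4 + lam * real k \<le> ob k" unfolding ob_def by (rule obj_ge2) (rule bnd)
    moreover have "lam * real k0 = lam * real k + lam * real (k0 - k)" using kk
      by (simp add: of_nat_diff algebra_simps)
    moreover have "t^2 * D > 0" using Dpos t by simp
    ultimately show ?thesis using ob0 small hl lam_le by linarith
  qed
  have "(LEAST k. k \<le> n \<and> (\<forall>k'\<le>n. ob k \<le> ob k')) = k0"
  proof (rule Least_equality)
    show "k0 \<le> n \<and> (\<forall>k'\<le>n. ob k0 \<le> ob k')"
      using k0n gt by (metis order.order_iff_strict)
    fix k assume "k \<le> n \<and> (\<forall>k'\<le>n. ob k \<le> ob k')"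
    then show "k0 \<le> k" using gt[of k] k0n by (metis linorder_not_le order.asym nat_less_le)
  qed
  then show ?thesis unfolding khat_def ob_def Y_def by simp
qed

definition QS :: "nat \<Rightarrow> ((nat \<Rightarrow> real) \<times> real) set" where
  "QS Nb = (\<lambda>(l, z, c). ((\<lambda>j. if j < Nb then real_of_int (l ! j) / real (Suc c) else 0),
                          real_of_int z / real (Suc c))) ` {(l, z, c). length l = (Nb::nat)}"

lemma countable_QS: "countable (QS Nb)"
  unfolding QS_def by (rule countable_image, rule countable_subset[OF subset_UNIV countableI_type])

definition apx :: "nat \<Rightarrow> real \<Rightarrow> real" where
  "apx c y = real_of_int \<lfloor>y * real (Suc c)\<rfloor> / real (Suc c)"

lemma apx_tendsto: "(\<lambda>c. apx c y) \<longlonglongrightarrow> y"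
proof (rule tendsto_sandwich[of "\<lambda>c. y + - inverse (real (Suc c))" _ sequentially "\<lambda>c. y"])
  show "\<forall>\<^sub>F c in sequentially. y + - inverse (real (Suc c)) \<le> apx c y"
  proof (intro always_eventually allI)
    fix c
    have "y * real (Suc c) - 1 \<le> real_of_int \<lfloor>y * real (Suc c)\<rfloor>" by linarith
    then have "(y * real (Suc c) - 1) / real (Suc c) \<le> apx c y"
      unfolding apx_def by (intro divide_right_mono) auto
    then show "y + - inverse (real (Suc c)) \<le> apx c y"
      by (simp add: diff_divide_distrib inverse_eq_divide)
  qed
  show "\<forall>\<^sub>F c in sequentially. apx c y \<le> y"
  proof (intro always_eventually allI)
    fix c
    have "real_of_int \<lfloor>y * real (Suc c)\<rfloor> \<le> y * real (Suc c)" by linarith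
    then show "apx c y \<le> y" unfolding apx_def by (simp add: divide_le_eq)
  qed
next
  show "(\<lambda>c. y + - inverse (real (Suc c))) \<longlonglongrightarrow> y" by (rule LIMSEQ_inverse_real_of_nat_add_minus)
qed simp

lemma apx_in_QS: "((\<lambda>j. if j < Nb then apx c (\<beta> j) else 0), apx c \<sigma>) \<in> QS Nb"
proof -
  let ?l = "map (\<lambda>j. \<lfloor>\<beta> j * real (Suc c)\<rfloor>) [0..<Nb]"
  let ?z = "\<lfloor>\<sigma> * real (Suc c)\<rfloor>"
  have "((\<lambda>j. if j < Nb then apx c (\<beta> j) else 0), apx c \<sigma>) =
        (\<lambda>(l, z, c). ((\<lambda>j. if j < Nb then real_of_int (l ! j) / real (Suc c) else 0),
                          real_of_int z / real (Suc c))) (?l, ?z, c)"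
    by (auto simp: apx_def fun_eq_iff)
  moreover have "(?l, ?z, c) \<in> {(l, z, c). length l = Nb}" by simp
  ultimately show ?thesis unfolding QS_def by blast
qed

lemma INF_QS:
  assumes Nb: "\<forall>i<n0. g k i < Nb"
  shows "(INF p\<in>(UNIV :: ((nat \<Rightarrow> real) \<times> real) set).
            sqnorm n0 (\<lambda>i. Y i - Xmul g k (fst p) i - snd p * Us i)) =
         (INF p\<in>QS Nb. sqnorm n0 (\<lambda>i. Y i - Xmul g k (fst p) i - snd p * Us i))"
    (is "(INF p\<in>UNIV. ?F p) = (INF p\<in>QS Nb. ?F p)")
proof (rule antisym)
  have ne: "QS Nb \<noteq> {}" using apx_in_QS by blast
  have bdd: "bdd_below (?F ` A)" for A by (rule bdd_belowI[of _ 0]) (auto simp: Fnonneg)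
  show "(INF p\<in>UNIV. ?F p) \<le> (INF p\<in>QS Nb. ?F p)"
    by (rule cINF_superset_mono[OF ne bdd]) auto
  show "(INF p\<in>QS Nb. ?F p) \<le> (INF p\<in>UNIV. ?F p)"
  proof (rule cINF_greatest)
    fix p :: "(nat \<Rightarrow> real) \<times> real"
    obtain \<beta> \<sigma> where p: "p = (\<beta>, \<sigma>)" by (cases p)
    define q where "q c = ((\<lambda>j. if j < Nb then apx c (\<beta> j) else 0), apx c \<sigma>)" for c
    have le: "(INF p\<in>QS Nb. ?F p) \<le> ?F (q c)" for c
      by (rule cINF_lower[OF bdd]) (simp add: q_def apx_in_QS)
    have eq: "?F (q c) = (\<Sum>i<n0. (Y i - apx c (\<beta> (g k i)) - apx c \<sigma> * Us i)^2)" for c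
      unfolding sqnorm_def q_def Xmul_def using Nb by (intro sum.cong) auto
    have "(\<lambda>c. ?F (q c)) \<longlonglongrightarrow> (\<Sum>i<n0. (Y i - \<beta> (g k i) - \<sigma> * Us i)^2)"
      unfolding eq by (intro tendsto_intros apx_tendsto)
    then have "(\<lambda>c. ?F (q c)) \<longlonglongrightarrow> ?F p"
      unfolding p sqnorm_def Xmul_def by simp
    then show "(INF p\<in>QS Nb. ?F p) \<le> ?F p"
      by (rule LIMSEQ_le_const) (use le in blast)
  qed simp
qed

lemma comp_meas:
  "(b, i) \<in> K \<Longrightarrow> (\<lambda>\<omega>. \<omega> (b, i)) \<in> borel_measurable (PiM K (\<lambda>_. NN))"
  using measurable_component_singleton[of "(b,i)" K "\<lambda>_. NN"]
  by (simp add: measurable_cong_sets[OF refl sets_NN])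

definition Nbd :: "(nat \<Rightarrow> nat \<Rightarrow> nat) \<Rightarrow> nat \<Rightarrow> nat \<Rightarrow> nat" where
  "Nbd g n0 k = Suc (Max (insert 0 (g k ` {..<n0})))"

lemma Nbd: "i < n0 \<Longrightarrow> g k i < Nbd g n0 k"
  unfolding Nbd_def by (simp add: le_imp_less_Suc)

lemma obj_meas:
  assumes b: "b \<le> B"
  shows "(\<lambda>\<omega>. obj n0 g lam (Yobs n0 g k0 \<beta>0 \<sigma>0 \<omega>) (\<lambda>i. \<omega> (b, i)) k)
          \<in> borel_measurable (PiM ({..B} \<times> {..<n0}) (\<lambda>_. NN))"
proof -
  have eq: "obj n0 g lam (Yobs n0 g k0 \<beta>0 \<sigma>0 \<omega>) (\<lambda>i. \<omega> (b, i)) k =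
     (INF p\<in>QS (Nbd g n0 k). sqnorm n0 (\<lambda>i. Yobs n0 g k0 \<beta>0 \<sigma>0 \<omega> i - Xmul g k (fst p) i - snd p * \<omega> (b, i)))
      + lam * real k" for \<omega>
    unfolding obj_def using Nbd[of _ n0 g k] by (subst INF_QS[where Nb="Nbd g n0 k"]) auto
  have F: "(\<lambda>\<omega>. sqnorm n0 (\<lambda>i. Yobs n0 g k0 \<beta>0 \<sigma>0 \<omega> i - Xmul g k (fst p) i - snd p * \<omega> (b, i)))
      \<in> borel_measurable (PiM ({..B} \<times> {..<n0}) (\<lambda>_. NN))" for p
    unfolding sqnorm_def Yobs_def
  proof (intro borel_measurable_sum)
    fix i assume i: "i \<in> {..<n0}"
    have [measurable]: "(\<lambda>\<omega>. \<omega> (0, i)) \<in> borel_measurable (PiM ({..B} \<times> {..<n0}) (\<lambda>_. NN))"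
      using i by (intro comp_meas) auto
    have [measurable]: "(\<lambda>\<omega>. \<omega> (b, i)) \<in> borel_measurable (PiM ({..B} \<times> {..<n0}) (\<lambda>_. NN))"
      using i b by (intro comp_meas) auto
    show "(\<lambda>\<omega>. (Xmul g k0 \<beta>0 i + \<sigma>0 * \<omega> (0, i) - Xmul g k (fst p) i - snd p * \<omega> (b, i))\<^sup>2)
      \<in> borel_measurable (PiM ({..B} \<times> {..<n0}) (\<lambda>_. NN))" by measurable
  qed
  show ?thesis unfolding eq
    by (intro borel_measurable_add borel_measurable_const borel_measurable_cINF_real countable_QS F)
qed

lemma khat_meas:
  assumes b: "b \<le> B"
  shows "(\<lambda>\<omega>. khat n0 n g lam (Yobs n0 g k0 \<beta>0 \<sigma>0 \<omega>) (\<lambda>i. \<omega> (b, i)))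
          \<in> measurable (PiM ({..B} \<times> {..<n0}) (\<lambda>_. NN)) (count_space UNIV)"
proof -
  have [measurable]: "(\<lambda>\<omega>. obj n0 g lam (Yobs n0 g k0 \<beta>0 \<sigma>0 \<omega>) (\<lambda>i. \<omega> (b, i)) k)
          \<in> borel_measurable (PiM ({..B} \<times> {..<n0}) (\<lambda>_. NN))" for k
    using obj_meas[OF b] .
  let ?M = "PiM ({..B} \<times> {..<n0}) (\<lambda>_. NN)"
  let ?ob = "\<lambda>k \<omega>. obj n0 g lam (Yobs n0 g k0 \<beta>0 \<sigma>0 \<omega>) (\<lambda>i. \<omega> (b, i)) k"
  have le: "Measurable.pred ?M (\<lambda>\<omega>. ?ob k \<omega> \<le> ?ob k' \<omega>)" for k k'
    unfolding pred_def by (rule borel_measurable_le) (rule obj_meas[OF b])+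
  have c: "Measurable.pred ?M (\<lambda>\<omega>. c)" for c :: bool
    by (cases c) (simp_all add: pred_def)
  have P: "Measurable.pred ?M (\<lambda>\<omega>. k \<le> n \<and> (\<forall>k'. k' \<le> n \<longrightarrow> ?ob k \<omega> \<le> ?ob k' \<omega>))" for k
    by (intro pred_intros_logic pred_intros_countable c le)
  show ?thesis unfolding khat_def by (rule measurable_Least) (rule P)
qed

lemma miss_sets: "miss_event n0 n g k0 \<beta>0 \<sigma>0 lam B \<in> sets (gauss_space n0 B)"
proof -
  have "miss_event n0 n g k0 \<beta>0 \<sigma>0 lam B =
        {\<omega> \<in> space (PiM ({..B} \<times> {..<n0}) (\<lambda>_. NN)).
          \<forall>b\<in>{1..B}. khat n0 n g lam (Yobs n0 g k0 \<beta>0 \<sigma>0 \<omega>) (\<lambda>i. \<omega> (b, i)) \<noteq> k0}"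
    unfolding miss_event_def gauss_eq by (auto simp: image_iff)
  also have "\<dots> \<in> sets (PiM ({..B} \<times> {..<n0}) (\<lambda>_. NN))"
  proof (intro sets.sets_Collect_finite_All)
    fix b assume "b \<in> {1..B}"
    then have m: "(\<lambda>\<omega>. khat n0 n g lam (Yobs n0 g k0 \<beta>0 \<sigma>0 \<omega>) (\<lambda>i. \<omega> (b, i)))
          \<in> measurable (PiM ({..B} \<times> {..<n0}) (\<lambda>_. NN)) (count_space UNIV)"
      using khat_meas by auto
    have "{\<omega> \<in> space (PiM ({..B} \<times> {..<n0}) (\<lambda>_. NN)).
          khat n0 n g lam (Yobs n0 g k0 \<beta>0 \<sigma>0 \<omega>) (\<lambda>i. \<omega> (b, i)) \<noteq> k0} =
          (\<lambda>\<omega>. khat n0 n g lam (Yobs n0 g k0 \<beta>0 \<sigma>0 \<omega>) (\<lambda>i. \<omega> (b, i))) -` (UNIV - {k0})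
           \<inter> space (PiM ({..B} \<times> {..<n0}) (\<lambda>_. NN))" by auto
    also have "\<dots> \<in> sets (PiM ({..B} \<times> {..<n0}) (\<lambda>_. NN))"
      by (rule measurable_sets[OF m]) simp
    finally show "{\<omega> \<in> space (PiM ({..B} \<times> {..<n0}) (\<lambda>_. NN)).
          khat n0 n g lam (Yobs n0 g k0 \<beta>0 \<sigma>0 \<omega>) (\<lambda>i. \<omega> (b, i)) \<noteq> k0}
          \<in> sets (PiM ({..B} \<times> {..<n0}) (\<lambda>_. NN))" .
  qed simp
  finally show ?thesis unfolding gauss_eq .
qed

lemma phi_meas: "(\<lambda>x. ennreal (std_normal_density x)) \<in> borel_measurable lborel"
  by measurable

lemma emeasure_NN: "A \<in> sets borel \<Longrightarrow>
  emeasure NN A = (\<integral>\<^sup>+ x. ennreal (std_normal_density x) * indicator A x \<partial>lborel)"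
  unfolding NN_def by (rule emeasure_density) (auto simp: phi_meas)

lemma sqrt2pi: "2 \<le> sqrt (2 * pi)"
proof -
  have "2^2 \<le> 2 * pi" using pi_gt3 by simp
  then show ?thesis by (rule real_le_rsqrt)
qed

lemma interval_lower:
  assumes a: "\<bar>a\<bar> \<le> M" and h: "0 < h" "h \<le> 1"
  shows "2 * h * (exp (- ((M+1)^2)/2) / sqrt (2*pi)) \<le> measure NN {a-h..a+h}"
proof -
  define c0 where "c0 = exp (- ((M+1)^2)/2) / sqrt (2*pi)"
  have c0: "0 \<le> c0" unfolding c0_def by simp
  have pt: "ennreal c0 * indicator {a-h..a+h} x \<le> ennreal (std_normal_density x) * indicator {a-h..a+h} x" for x
  proof (cases "x \<in> {a-h..a+h}")
    case True
    then have "\<bar>x\<bar> \<le> M + 1" using a h by auto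
    then have "x^2 \<le> (M+1)^2" by (metis abs_le_square_iff abs_of_nonneg add_increasing2 a abs_ge_zero zero_le_one order_trans)
    then have "exp (- ((M+1)^2)/2) \<le> exp (- (x^2)/2)" by simp
    then have "c0 \<le> std_normal_density x" unfolding c0_def std_normal_density_def
      by (simp add: divide_right_mono)
    then show ?thesis using True by (simp add: ennreal_leI)
  qed simp
  have "ennreal (c0 * (2*h)) = ennreal c0 * emeasure lborel {a-h..a+h}"
    using h c0 by (simp add: ennreal_mult)
  also have "\<dots> = (\<integral>\<^sup>+ x. ennreal c0 * indicator {a-h..a+h} x \<partial>lborel)"
    by (simp add: nn_integral_cmult_indicator)
  also have "\<dots> \<le> (\<integral>\<^sup>+ x. ennreal (std_normal_density x) * indicator {a-h..a+h} x \<partial>lborel)"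
    by (intro nn_integral_mono pt)
  also have "\<dots> = emeasure NN {a-h..a+h}" by (simp add: emeasure_NN)
  also have "\<dots> = ennreal (measure NN {a-h..a+h})" by (rule NNp.emeasure_eq_measure)
  finally have "c0 * (2*h) \<le> measure NN {a-h..a+h}"
    by (simp add: ennreal_le_iff)
  then show ?thesis unfolding c0_def by (simp add: mult_ac)
qed

lemma interval_upper:
  assumes s: "0 < s"
  shows "emeasure NN {c-s<..<c+s} \<le> ennreal s"
proof -
  have pt: "ennreal (std_normal_density x) * indicator {c-s<..<c+s} x \<le> ennreal (1/2) * indicator {c-s<..<c+s} x" for x
  proof -
    have "std_normal_density x \<le> 1 / sqrt (2*pi)" unfolding std_normal_density_def
      by (simp add: divide_le_cancel)
    also have "\<dots> \<le> 1/2" using sqrt2pi by (simp add: divide_le_cancel)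
    finally have le: "std_normal_density x \<le> 1/2" .
    show ?thesis using ennreal_leI[OF le] by (auto simp: indicator_def)
  qed
  have "emeasure NN {c-s<..<c+s} = (\<integral>\<^sup>+ x. ennreal (std_normal_density x) * indicator {c-s<..<c+s} x \<partial>lborel)"
    by (simp add: emeasure_NN)
  also have "\<dots> \<le> (\<integral>\<^sup>+ x. ennreal (1/2) * indicator {c-s<..<c+s} x \<partial>lborel)"
    by (intro nn_integral_mono pt)
  also have "\<dots> = ennreal (1/2) * ennreal (2* s)"
    using s by (simp add: nn_integral_cmult_indicator)
  also have "\<dots> = ennreal (1/2 * (2 * s))" by (rule ennreal_mult[symmetric]) (use s in auto)
  also have "\<dots> = ennreal s" by simp
  finally show ?thesis .
qed

lemma tail_small:
  assumes e: "0 < \<epsilon>"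
  shows "\<exists>M\<ge>1. measure NN {x. M < \<bar>x\<bar>} \<le> \<epsilon>"
proof -
  define A where "A k = {x::real. real k < \<bar>x\<bar>}" for k
  have sA: "range A \<subseteq> sets NN" unfolding A_def by auto
  have dA: "decseq A" unfolding A_def decseq_def by auto
  have iA: "(\<Inter>k. A k) = {}"
  proof (safe)
    fix x assume "x \<in> (\<Inter>k. A k)"
    then have "x \<in> A (nat \<lceil>\<bar>x\<bar>\<rceil>)" by blast
    moreover have "real (nat \<lceil>\<bar>x\<bar>\<rceil>) = of_int \<lceil>\<bar>x\<bar>\<rceil>" by simp
    moreover have "\<bar>x\<bar> \<le> of_int \<lceil>\<bar>x\<bar>\<rceil>" by (rule le_of_int_ceiling)
    ultimately show "x \<in> {}" unfolding A_def by simp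
  qed
  have "(\<lambda>k. measure NN (A k)) \<longlonglongrightarrow> measure NN (\<Inter>k. A k)"
    by (rule NNp.finite_Lim_measure_decseq[OF sA dA])
  then have "(\<lambda>k. measure NN (A k)) \<longlonglongrightarrow> 0" using iA by simp
  then have "\<forall>\<^sub>F k in sequentially. measure NN (A k) < \<epsilon>" using e by (rule order_tendstoD)
  then obtain k where k: "measure NN (A k) < \<epsilon>" by (auto simp: eventually_sequentially)
  have "{x. real k + 1 < \<bar>x\<bar>} \<subseteq> A k" unfolding A_def by auto
  then have "measure NN {x. real k + 1 < \<bar>x\<bar>} \<le> measure NN (A k)"
    by (intro NNp.finite_measure_mono) (auto simp: A_def)
  then show ?thesis using k by (intro exI[of _ "real k + 1"]) auto
qed

lemma box_measure:
  fixes F :: "nat \<times> nat \<Rightarrow> real set"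
  assumes "finite J" "\<And>j. j \<in> J \<Longrightarrow> F j \<in> sets borel"
  shows "measure (PiM J (\<lambda>_. NN)) (PiE J F) = (\<Prod>j\<in>J. measure NN (F j))"
proof -
  have "emeasure (PiM J (\<lambda>_. NN)) (PiE J F) = (\<Prod>j\<in>J. emeasure NN (F j))"
    using assms by (intro PS.emeasure_PiM) auto
  also have "\<dots> = (\<Prod>j\<in>J. ennreal (measure NN (F j)))"
    by (simp add: NNp.emeasure_eq_measure)
  also have "\<dots> = ennreal (\<Prod>j\<in>J. measure NN (F j))" by (rule prod_ennreal) simp
  finally show ?thesis by (intro measure_eq_emeasure_eq_ennreal) (auto intro: prod_nonneg)
qed

definition GA :: "nat \<Rightarrow> nat \<Rightarrow> real \<Rightarrow> real \<Rightarrow> real \<Rightarrow> nat \<Rightarrow> nat \<Rightarrow> ((nat \<times> nat) \<Rightarrow> real) set" where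
  "GA m B M s h i0 j0 = {\<omega> \<in> space (PiM ({..B} \<times> {..<m}) (\<lambda>_. NN)).
      (\<forall>i<m. \<bar>\<omega> (0, i)\<bar> \<le> M) \<and> s \<le> \<bar>\<omega> (0, i0) - \<omega> (0, j0)\<bar> \<and>
      (\<forall>b\<in>{1..B}. \<not> (\<forall>i<m. \<bar>\<omega> (b, i) - \<omega> (0, i)\<bar> \<le> h))}"

lemma pred_imp_const: "(c \<Longrightarrow> Measurable.pred M P) \<Longrightarrow> Measurable.pred M (\<lambda>x. c \<longrightarrow> P x)"
  by (cases c) (auto simp: pred_def)

lemma pred_le_fun: "f \<in> borel_measurable M \<Longrightarrow> g \<in> borel_measurable M \<Longrightarrow> Measurable.pred M (\<lambda>x. (f x::real) \<le> g x)"
  unfolding pred_def by (rule borel_measurable_le)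

lemma GA_sets:
  assumes ij: "i0 < m" "j0 < m"
  shows "GA m B M s h i0 j0 \<in> sets (PiM ({..B} \<times> {..<m}) (\<lambda>_. NN))"
proof -
  let ?M = "PiM ({..B} \<times> {..<m}) (\<lambda>_. NN)"
  have c: "(\<lambda>\<omega>. \<omega> (b, i)) \<in> borel_measurable ?M" if "b \<le> B" "i < m" for b i
    using that by (intro comp_meas) auto
  have p1: "Measurable.pred ?M (\<lambda>\<omega>. \<forall>i. i < m \<longrightarrow> \<bar>\<omega> (0, i)\<bar> \<le> M)"
    by (intro pred_intros_countable pred_imp_const pred_le_fun borel_measurable_abs c
        borel_measurable_const) auto
  have p2: "Measurable.pred ?M (\<lambda>\<omega>. s \<le> \<bar>\<omega> (0, i0) - \<omega> (0, j0)\<bar>)"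
    using ij by (intro pred_le_fun borel_measurable_abs borel_measurable_diff c borel_measurable_const) auto
  have p3: "Measurable.pred ?M (\<lambda>\<omega>. \<forall>b\<in>{1..B}. \<not> (\<forall>i. i < m \<longrightarrow> \<bar>\<omega> (b, i) - \<omega> (0, i)\<bar> \<le> h))"
  proof (intro pred_intros_countable_bounded pred_intros_logic(2) pred_intros_countable pred_imp_const)
    fix b i assume "b \<in> {1..B}" "i < m"
    then show "Measurable.pred ?M (\<lambda>\<omega>. \<bar>\<omega> (b, i) - \<omega> (0, i)\<bar> \<le> h)"
      by (intro pred_le_fun borel_measurable_abs borel_measurable_diff c borel_measurable_const) auto
  qed
  have "Measurable.pred ?M (\<lambda>\<omega>. (\<forall>i<m. \<bar>\<omega> (0, i)\<bar> \<le> M) \<and> s \<le> \<bar>\<omega> (0, i0) - \<omega> (0, j0)\<bar> \<and>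
      (\<forall>b\<in>{1..B}. \<not> (\<forall>i<m. \<bar>\<omega> (b, i) - \<omega> (0, i)\<bar> \<le> h)))"
    using p1 p2 p3 by (intro pred_intros_logic(3)) auto
  then show ?thesis unfolding GA_def pred_def .
qed

lemma miss2:
  assumes h: "0 < h" and xx: "0 \<le> xx" and M0: "0 \<le> M" and ij: "i0 < m" "j0 < m"
    and hyp: "\<And>c. (\<forall>i<m. \<bar>c i\<bar> \<le> M) \<Longrightarrow> xx \<le> (\<Prod>i<m. measure NN {c i - h..c i + h})"
  shows "emeasure (PiM ({..B} \<times> {..<m}) (\<lambda>_. NN)) (GA m B M s h i0 j0) \<le> ennreal ((1-xx)^B)"
proof (induction B)
  case 0
  have "prob_space (PiM ({..0::nat} \<times> {..<m::nat}) (\<lambda>_. NN))" using prob_PiM by blast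
  then show ?case using prob_space.emeasure_le_1 by fastforce
next
  case (Suc B)
  have xx1: "xx \<le> 1"
  proof -
    have "xx \<le> (\<Prod>i<m. measure NN {0 - h..0 + h})" using hyp[of "\<lambda>_. 0"] M0 by simp
    also have "\<dots> \<le> 1" by (intro prod_le_1) (auto simp: NNp.prob_le_1)
    finally show ?thesis .
  qed
  define I where "I = {..B} \<times> {..<m}"
  define J where "J = {Suc B} \<times> {..<m}"
  define K where "K = {..Suc B} \<times> {..<m}"
  have IJ: "I \<inter> J = {}" "finite I" "finite J" "K = I \<union> J"
    unfolding I_def J_def K_def by auto
  interpret PJ: prob_space "PiM J (\<lambda>_. NN)" by (rule prob_PiM)
  have GAI: "GA m B M s h i0 j0 \<in> sets (PiM I (\<lambda>_. NN))" unfolding I_def using GA_sets ij by blast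
  have GAK: "GA m (Suc B) M s h i0 j0 \<in> sets (PiM K (\<lambda>_. NN))" unfolding K_def using GA_sets ij by blast
  have mI: "merge I J (x, y) (b, i) = x (b, i)" if "b \<le> B" "i < m" for x y b i
    using that unfolding merge_def I_def by auto
  have mJ: "merge I J (x, y) (Suc B, i) = y (Suc B, i)" if "i < m" for x y i
    using that unfolding merge_def I_def J_def by auto
  have pt: "emeasure (PiM J (\<lambda>_. NN)) {y \<in> space (PiM J (\<lambda>_. NN)). merge I J (x, y) \<in> GA m (Suc B) M s h i0 j0}
       \<le> ennreal (1 - xx) * indicator (GA m B M s h i0 j0) x"
    if x: "x \<in> space (PiM I (\<lambda>_. NN))" for x
  proof (cases "x \<in> GA m B M s h i0 j0")
    case False
    have "{y \<in> space (PiM J (\<lambda>_. NN)). merge I J (x, y) \<in> GA m (Suc B) M s h i0 j0} = {}"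
    proof (safe)
      fix y assume y: "y \<in> space (PiM J (\<lambda>_. NN))" and my: "merge I J (x, y) \<in> GA m (Suc B) M s h i0 j0"
      have "x \<in> GA m B M s h i0 j0"
        unfolding GA_def
      proof (intro CollectI conjI ballI allI impI)
        show "x \<in> space (PiM ({..B} \<times> {..<m}) (\<lambda>_. NN))" using x unfolding I_def .
        fix i assume "i < m" then show "\<bar>x (0, i)\<bar> \<le> M"
          using my mI[of 0 i x y] unfolding GA_def by auto
      next
        show "s \<le> \<bar>x (0, i0) - x (0, j0)\<bar>"
          using my mI[of 0 i0 x y] mI[of 0 j0 x y] ij unfolding GA_def by auto
      next
        fix b assume b: "b \<in> {1..B}"
        have "\<not> (\<forall>i<m. \<bar>merge I J (x, y) (b, i) - merge I J (x, y) (0, i)\<bar> \<le> h)"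
          using my b unfolding GA_def by auto
        then show "\<not> (\<forall>i<m. \<bar>x (b, i) - x (0, i)\<bar> \<le> h)"
          using b mI[of b _ x y] mI[of 0 _ x y] by auto
      qed
      then show "y \<in> {}" using False by simp
    qed
    note e = this
    show ?thesis unfolding e by simp
  next
    case True
    define box where "box = PiE J (\<lambda>p. {x (0, snd p) - h..x (0, snd p) + h})"
    have boxs: "box \<in> sets (PiM J (\<lambda>_. NN))" unfolding box_def using IJ by (intro sets_PiM_I_finite) auto
    have sub: "{y \<in> space (PiM J (\<lambda>_. NN)). merge I J (x, y) \<in> GA m (Suc B) M s h i0 j0}
        \<subseteq> space (PiM J (\<lambda>_. NN)) - box"
    proof (safe)
      fix y assume y: "y \<in> space (PiM J (\<lambda>_. NN))" and my: "merge I J (x, y) \<in> GA m (Suc B) M s h i0 j0"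
        and yb: "y \<in> box"
      have "\<not> (\<forall>i<m. \<bar>merge I J (x, y) (Suc B, i) - merge I J (x, y) (0, i)\<bar> \<le> h)"
        using my unfolding GA_def by auto
      then obtain i where i: "i < m" "\<not> \<bar>y (Suc B, i) - x (0, i)\<bar> \<le> h"
        using mJ[of _ x y] mI[of 0 _ x y] by auto
      have "(Suc B, i) \<in> J" using i unfolding J_def by auto
      then have "y (Suc B, i) \<in> {x (0, i) - h..x (0, i) + h}" using yb unfolding box_def by (auto simp: PiE_iff)
      then show False using i by auto
    qed
    have "measure (PiM J (\<lambda>_. NN)) box = (\<Prod>p\<in>J. measure NN {x (0, snd p) - h..x (0, snd p) + h})"
      unfolding box_def using IJ by (intro box_measure) auto
    also have "\<dots> = (\<Prod>i<m. measure NN {x (0, i) - h..x (0, i) + h})"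
    proof -
      have "J = (\<lambda>i. (Suc B, i)) ` {..<m}" unfolding J_def by auto
      moreover have "inj_on (\<lambda>i. (Suc B, i)) {..<m}" by (auto simp: inj_on_def)
      ultimately show ?thesis by (simp add: prod.reindex)
    qed
    finally have mb: "xx \<le> measure (PiM J (\<lambda>_. NN)) box"
      using hyp[of "\<lambda>i. x (0, i)"] True unfolding GA_def by auto
    have "emeasure (PiM J (\<lambda>_. NN)) {y \<in> space (PiM J (\<lambda>_. NN)). merge I J (x, y) \<in> GA m (Suc B) M s h i0 j0}
        \<le> emeasure (PiM J (\<lambda>_. NN)) (space (PiM J (\<lambda>_. NN)) - box)"
      by (rule emeasure_mono[OF sub]) (use boxs in auto)
    also have "\<dots> = ennreal (1 - measure (PiM J (\<lambda>_. NN)) box)"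
      using PJ.prob_compl[OF boxs] by (simp add: PJ.emeasure_eq_measure)
    also have "\<dots> \<le> ennreal (1 - xx)" using mb by (intro ennreal_leI) auto
    finally show ?thesis using True by simp
  qed
  have "emeasure (PiM K (\<lambda>_. NN)) (GA m (Suc B) M s h i0 j0) =
    (\<integral>\<^sup>+ x. emeasure (PiM J (\<lambda>_. NN)) {y \<in> space (PiM J (\<lambda>_. NN)). merge I J (x, y) \<in> GA m (Suc B) M s h i0 j0} \<partial>PiM I (\<lambda>_. NN))"
    by (rule split_emeasure[OF IJ GAK])
  also have "\<dots> \<le> (\<integral>\<^sup>+ x. ennreal (1 - xx) * indicator (GA m B M s h i0 j0) x \<partial>PiM I (\<lambda>_. NN))"
    by (intro nn_integral_mono pt)
  also have "\<dots> = ennreal (1 - xx) * emeasure (PiM I (\<lambda>_. NN)) (GA m B M s h i0 j0)"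
    by (rule nn_integral_cmult_indicator[OF GAI])
  also have "\<dots> \<le> ennreal (1 - xx) * ennreal ((1 - xx)^B)"
    using Suc.IH unfolding I_def by (intro mult_left_mono) auto
  also have "\<dots> = ennreal ((1 - xx)^Suc B)"
    using xx1 by (simp add: ennreal_mult[symmetric] mult.commute)
  finally show ?case unfolding K_def .
qed

lemma bad1:
  fixes i :: nat and K :: "(nat \<times> nat) set"
  assumes K: "(0, i) \<in> K" "finite K"
  shows "measure (PiM K (\<lambda>_. NN)) {\<omega> \<in> space (PiM K (\<lambda>_. NN)). M < \<bar>\<omega> (0, i)\<bar>} = measure NN {x. M < \<bar>x\<bar>}"
proof -
  define F where "F p = (if p = (0, i) then {x. M < \<bar>x\<bar>} else UNIV)" for p :: "nat \<times> nat"
  have "{\<omega> \<in> space (PiM K (\<lambda>_. NN)). M < \<bar>\<omega> (0, i)\<bar>} = PiE K F"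
  proof (intro equalityI subsetI)
    fix x assume "x \<in> {\<omega> \<in> space (PiM K (\<lambda>_. NN)). M < \<bar>\<omega> (0, i)\<bar>}"
    then show "x \<in> PiE K F" unfolding F_def by (auto simp: space_PiM PiE_iff)
  next
    fix x assume x: "x \<in> PiE K F"
    then have "x (0, i) \<in> F (0, i)" using K by (auto simp: PiE_iff)
    then show "x \<in> {\<omega> \<in> space (PiM K (\<lambda>_. NN)). M < \<bar>\<omega> (0, i)\<bar>}"
      using x unfolding F_def by (auto simp: space_PiM PiE_iff)
  qed
  moreover have "measure (PiM K (\<lambda>_. NN)) (PiE K F) = (\<Prod>p\<in>K. measure NN (F p))"
    using K by (intro box_measure) (auto simp: F_def)
  moreover have "(\<Prod>p\<in>K. measure NN (F p)) = (\<Prod>p\<in>K. if p = (0, i) then measure NN {x. M < \<bar>x\<bar>} else 1)"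
    unfolding F_def using NNp.prob_space by (intro prod.cong) auto
  moreover have "\<dots> = measure NN {x. M < \<bar>x\<bar>}" using K by (simp add: prod.delta)
  ultimately show ?thesis by simp
qed

lemma bad2:
  fixes i0 j0 :: nat and K :: "(nat \<times> nat) set"
  assumes K: "(0, i0) \<in> K" "(0, j0) \<in> K" "i0 \<noteq> j0" "finite K" and s: "0 < s"
  shows "emeasure (PiM K (\<lambda>_. NN)) {\<omega> \<in> space (PiM K (\<lambda>_. NN)). \<bar>\<omega> (0, i0) - \<omega> (0, j0)\<bar> < s} \<le> ennreal s"
proof -
  define I where "I = K - {(0, i0)}"
  define J where "J = {(0::nat, i0)}"
  have IJ: "I \<inter> J = {}" "finite I" "finite J" "K = I \<union> J" using K unfolding I_def J_def by auto
  let ?A = "{\<omega> \<in> space (PiM K (\<lambda>_. NN)). \<bar>\<omega> (0, i0) - \<omega> (0, j0)\<bar> < s}"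
  have As: "?A \<in> sets (PiM K (\<lambda>_. NN))"
  proof -
    have "Measurable.pred (PiM K (\<lambda>_. NN)) (\<lambda>\<omega>. \<bar>\<omega> (0, i0) - \<omega> (0, j0)\<bar> < s)"
      unfolding pred_def
      by (intro borel_measurable_less borel_measurable_abs borel_measurable_diff comp_meas
          borel_measurable_const K)
    then show ?thesis unfolding pred_def .
  qed
  interpret PI: prob_space "PiM I (\<lambda>_. NN)" by (rule prob_PiM)
  have pt: "emeasure (PiM J (\<lambda>_. NN)) {y \<in> space (PiM J (\<lambda>_. NN)). merge I J (x, y) \<in> ?A} \<le> ennreal s"
    if x: "x \<in> space (PiM I (\<lambda>_. NN))" for x
  proof -
    have j0: "(0, j0) \<in> I" using K unfolding I_def by auto
    have "{y \<in> space (PiM J (\<lambda>_. NN)). merge I J (x, y) \<in> ?A} \<subseteq>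
          PiE J (\<lambda>_. {x (0, j0) - s<..<x (0, j0) + s})"
    proof
      fix y assume "y \<in> {y \<in> space (PiM J (\<lambda>_. NN)). merge I J (x, y) \<in> ?A}"
      then have y: "y \<in> space (PiM J (\<lambda>_. NN))" "\<bar>merge I J (x, y) (0, i0) - merge I J (x, y) (0, j0)\<bar> < s"
        by auto
      have "merge I J (x, y) (0, i0) = y (0, i0)" "merge I J (x, y) (0, j0) = x (0, j0)"
        using j0 unfolding merge_def I_def J_def by auto
      then show "y \<in> PiE J (\<lambda>_. {x (0, j0) - s<..<x (0, j0) + s})"
        using y unfolding J_def by (auto simp: space_PiM PiE_iff)
    qed
    then have "emeasure (PiM J (\<lambda>_. NN)) {y \<in> space (PiM J (\<lambda>_. NN)). merge I J (x, y) \<in> ?A}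
       \<le> emeasure (PiM J (\<lambda>_. NN)) (PiE J (\<lambda>_. {x (0, j0) - s<..<x (0, j0) + s}))"
      by (intro emeasure_mono sets_PiM_I_finite) (auto simp: J_def)
    also have "\<dots> = (\<Prod>p\<in>J. emeasure NN {x (0, j0) - s<..<x (0, j0) + s})"
      by (intro PS.emeasure_PiM) (auto simp: J_def)
    also have "\<dots> = emeasure NN {x (0, j0) - s<..<x (0, j0) + s}" by (simp add: J_def)
    also have "\<dots> \<le> ennreal s" by (rule interval_upper[OF s])
    finally show ?thesis .
  qed
  have "emeasure (PiM K (\<lambda>_. NN)) ?A =
    (\<integral>\<^sup>+ x. emeasure (PiM J (\<lambda>_. NN)) {y \<in> space (PiM J (\<lambda>_. NN)). merge I J (x, y) \<in> ?A} \<partial>PiM I (\<lambda>_. NN))"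
    by (rule split_emeasure[OF IJ As])
  also have "\<dots> \<le> (\<integral>\<^sup>+ x. ennreal s \<partial>PiM I (\<lambda>_. NN))"
    by (intro nn_integral_mono pt)
  also have "\<dots> = ennreal s" using PI.emeasure_space_1 by simp
  finally show ?thesis .
qed

lemma find_pair:
  assumes nd: "nested_designs n0 n d g" and k0n: "k0 \<le> n" and lt: "d k0 < n0"
  shows "\<exists>i0 j0. i0 < n0 \<and> j0 < n0 \<and> i0 \<noteq> j0 \<and> (\<forall>k\<le>k0. g k i0 = g k j0)"
proof -
  have nd1: "\<forall>k\<le>n. g k ` {..<n0} = {..<d k}" using nd unfolding nested_designs_def by (rule conjunct1)
  have ref: "\<forall>k<n. \<forall>i<n0. \<forall>j<n0. g (Suc k) i = g (Suc k) j \<longrightarrow> g k i = g k j"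
    using nd unfolding nested_designs_def by (rule conjunct2)
  have img: "g k0 ` {..<n0} = {..<d k0}" using nd1 k0n by blast
  have "\<not> inj_on (g k0) {..<n0}"
  proof
    assume "inj_on (g k0) {..<n0}"
    then have "card (g k0 ` {..<n0}) = n0" by (simp add: card_image)
    then show False using img lt by simp
  qed
  then obtain i0 j0 where ij: "i0 < n0" "j0 < n0" "i0 \<noteq> j0" "g k0 i0 = g k0 j0"
    unfolding inj_on_def by (auto simp: lessThan_iff)
  have "\<forall>j. j \<le> k0 \<longrightarrow> g (k0 - j) i0 = g (k0 - j) j0"
  proof (intro allI)
    fix j show "j \<le> k0 \<longrightarrow> g (k0 - j) i0 = g (k0 - j) j0"
    proof (induction j)
      case 0 then show ?case using ij by simp
    next
      case (Suc j)
      show ?case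
      proof
        assume j: "Suc j \<le> k0"
        have e: "Suc (k0 - Suc j) = k0 - j" using j by simp
        have X: "g (k0 - j) i0 = g (k0 - j) j0" using Suc.IH j by simp
        have Y: "g (Suc (k0 - Suc j)) i0 = g (Suc (k0 - Suc j)) j0" by (simp only: e) (rule X)
        have "k0 - Suc j < n" using j k0n by simp
        then show "g (k0 - Suc j) i0 = g (k0 - Suc j) j0" using ref ij(1,2) Y by blast
      qed
    qed
  qed
  then have "\<forall>k\<le>k0. g k i0 = g k j0"
  proof (intro allI impI)
    fix k assume a: "\<forall>j. j \<le> k0 \<longrightarrow> g (k0 - j) i0 = g (k0 - j) j0" and k: "k \<le> k0"
    have "k0 - (k0 - k) = k" using k by simp
    then show "g k i0 = g k j0" using a[rule_format, of "k0 - k"] by simp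
  qed
  then show ?thesis using ij by blast
qed

lemma xx_bound:
  fixes t cc :: real and n0 :: nat
  assumes t: "0 < t" "t \<le> 1" "t \<le> cc" and n0: "2 \<le> n0"
  shows "(t^8)^(n0-1) / real (n0-1) \<le> (t^3 * cc)^n0"
proof -
  have "(t^8)^(n0-1) / real (n0-1) \<le> (t^8)^(n0-1)"
  proof -
    have "(t^8)^(n0-1) / real (n0-1) \<le> (t^8)^(n0-1) / 1"
      using n0 t by (intro divide_left_mono) auto
    then show ?thesis by simp
  qed
  also have "(t^8)^(n0-1) = t^(8*(n0-1))" by (simp add: power_mult)
  also have "\<dots> \<le> t^(4*n0)" using t n0 by (intro power_decreasing) auto
  also have "\<dots> = (t^3 * t)^n0" by (simp add: power_mult flip: power_Suc2)
  also have "\<dots> \<le> (t^3 * cc)^n0" using t by (intro power_mono mult_left_mono) auto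
  finally show ?thesis .
qed

lemma lam_bound:
  fixes t \<sigma>0 lam :: real
  assumes t: "0 < t" and lo: "t^8 * \<sigma>0^2 / (sqrt (1 + 2/3 * (t^8) powr (1/4)) - 1) \<le> lam"
  shows "3 * t^6 * \<sigma>0^2 \<le> lam"
proof -
  have gp: "(t^8) powr (1/4) = t^2"
  proof -
    have "(t^8) powr (1/4) = (t powr 8) powr (1/4)" using t by simp
    also have "\<dots> = t powr 2" by (simp add: powr_powr)
    also have "\<dots> = t^2" using t by simp
    finally show ?thesis .
  qed
  define den where "den = sqrt (1 + 2/3 * t^2) - 1"
  have dpos: "0 < den" unfolding den_def using t by simp
  have dle: "den \<le> t^2/3"
  proof -
    have "1 + 2/3 * t^2 \<le> (1 + t^2/3)^2" using t by (simp add: power2_eq_square algebra_simps)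
    then have "sqrt (1 + 2/3 * t^2) \<le> 1 + t^2/3" by (simp add: real_sqrt_le_iff real_le_lsqrt)
    then show ?thesis unfolding den_def by simp
  qed
  have t8: "t^8 = t^6 * t^2" by (simp flip: power_add)
  have "3 * t^6 * \<sigma>0^2 = t^8 * \<sigma>0^2 / (t^2/3)" unfolding t8 using t by (simp add: field_simps)
  also have "\<dots> \<le> t^8 * \<sigma>0^2 / den" using dpos dle t by (intro divide_left_mono) auto
  also have "\<dots> \<le> lam" using lo gp unfolding den_def by simp
  finally show ?thesis .
qed

theorem lemma3:
  fixes n0 n k0 :: nat and d :: "nat \<Rightarrow> nat" and g :: "nat \<Rightarrow> nat \<Rightarrow> nat"
  assumes "n0 \<ge> 1"
    and "nested_designs n0 n d g"
    and "k0 \<le> n"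
    and "int n0 - int (d k0) > 4"
  shows "\<forall>\<delta>>0. \<exists>\<gamma>>0. \<forall>(\<beta>0 :: nat \<Rightarrow> real) (\<sigma>0 :: real) (lam :: real) (B :: nat).
           \<sigma>0 > 0 \<longrightarrow> minimal_k0 n0 g k0 \<beta>0 \<longrightarrow>
           \<gamma> * \<sigma>0^2 / (sqrt (1 + 2/3 * \<gamma> powr (1/4)) - 1) \<le> lam \<longrightarrow>
           (k0 = 0 \<or> lam \<le> real n0 * \<gamma> powr (1/4) * Cmin n0 g k0 \<beta>0 / 6) \<longrightarrow>
           miss_event n0 n g k0 \<beta>0 \<sigma>0 lam B \<in> sets (gauss_space n0 B) \<and>
           measure (gauss_space n0 B) (miss_event n0 n g k0 \<beta>0 \<sigma>0 lam B)
             \<le> (1 - \<gamma>^(n0 - 1) / real (n0 - 1))^B + \<delta>"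
proof -
  note nd = assms(2) and k0n = assms(3)
  have n05: "5 \<le> n0" and dlt: "d k0 < n0" using assms(4) by linarith+
  have n01: "1 \<le> n0" using n05 by simp
  obtain i0 j0 where ij: "i0 < n0" "j0 < n0" "i0 \<noteq> j0" and gij: "\<forall>k\<le>k0. g k i0 = g k j0"
    using find_pair[OF nd k0n dlt] by blast
  show ?thesis
  proof (intro allI impI)
    fix \<delta> :: real assume \<delta>: "0 < \<delta>"
    obtain M where M: "1 \<le> M" "measure NN {x. M < \<bar>x\<bar>} \<le> \<delta> / (2 * real n0)"
      using tail_small[of "\<delta> / (2 * real n0)"] \<delta> n01 by auto
    define s where "s = \<delta> / 4"
    define R where "R = real n0 * M"
    define e where "e = exp (- ((M+1)^2)/2) / sqrt (2*pi)"
    define cc where "cc = e / real n0"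
    define t where "t = min (min 1 (s / (6*R))) cc"
    have spos: "0 < s" unfolding s_def using \<delta> by simp
    have Rpos: "0 < R" unfolding R_def using M n01 by simp
    have epos: "0 < e" unfolding e_def by simp
    have ccpos: "0 < cc" unfolding cc_def using epos n01 by simp
    have t: "0 < t" "t \<le> 1" "t \<le> s / (6*R)" "t \<le> cc"
      unfolding t_def using spos Rpos ccpos by auto
    have tR: "6 * t * (real n0 * M) \<le> s"
      using t(3) Rpos unfolding R_def by (simp add: le_divide_eq mult_ac)
    show "\<exists>\<gamma>>0. \<forall>(\<beta>0 :: nat \<Rightarrow> real) (\<sigma>0 :: real) (lam :: real) (B :: nat).
           \<sigma>0 > 0 \<longrightarrow> minimal_k0 n0 g k0 \<beta>0 \<longrightarrow>
           \<gamma> * \<sigma>0^2 / (sqrt (1 + 2/3 * \<gamma> powr (1/4)) - 1) \<le> lam \<longrightarrow>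
           (k0 = 0 \<or> lam \<le> real n0 * \<gamma> powr (1/4) * Cmin n0 g k0 \<beta>0 / 6) \<longrightarrow>
           miss_event n0 n g k0 \<beta>0 \<sigma>0 lam B \<in> sets (gauss_space n0 B) \<and>
           measure (gauss_space n0 B) (miss_event n0 n g k0 \<beta>0 \<sigma>0 lam B)
             \<le> (1 - \<gamma>^(n0 - 1) / real (n0 - 1))^B + \<delta>"
    proof (intro exI[of _ "t^8"] conjI allI impI)
      show "0 < t^8" using t by simp
      fix \<beta>0 :: "nat \<Rightarrow> real" and \<sigma>0 lam :: real and B :: nat
      assume s0: "0 < \<sigma>0" and "minimal_k0 n0 g k0 \<beta>0"
        and lo: "t^8 * \<sigma>0^2 / (sqrt (1 + 2/3 * (t^8) powr (1/4)) - 1) \<le> lam"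
        and hi: "k0 = 0 \<or> lam \<le> real n0 * (t^8) powr (1/4) * Cmin n0 g k0 \<beta>0 / 6"
      show "miss_event n0 n g k0 \<beta>0 \<sigma>0 lam B \<in> sets (gauss_space n0 B)" by (rule miss_sets)
      have gp: "(t^8) powr (1/4) = t^2"
      proof -
        have "(t^8) powr (1/4) = (t powr 8) powr (1/4)" using t by simp
        also have "\<dots> = t powr 2" by (simp add: powr_powr)
        also have "\<dots> = t^2" using t by simp
        finally show ?thesis .
      qed
      have lamlo: "3 * t^6 * \<sigma>0^2 \<le> lam" by (rule lam_bound[OF t(1) lo])
      have lamhi: "k0 = 0 \<or> lam \<le> real n0 * t^2 * Cmin n0 g k0 \<beta>0 / 6" using hi gp by simp
      define h where "h = t^3 / (2 * real n0)"
      define xx where "xx = (t^8)^(n0-1) / real (n0-1)"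
      have hpos: "0 < h" unfolding h_def using t n01 by simp
      have h1: "h \<le> 1"
      proof -
        have "t^3 \<le> 1" using t by (simp add: power_le_one)
        then show ?thesis unfolding h_def using n01 by (simp add: divide_le_eq)
      qed
      have xx0: "0 \<le> xx" unfolding xx_def using t by simp
      have hyp: "xx \<le> (\<Prod>i<n0. measure NN {c i - h..c i + h})" if c: "\<forall>i<n0. \<bar>c i\<bar> \<le> M" for c
      proof -
        have q: "2 * h * e = t^3 * cc" unfolding h_def cc_def using n01 by (simp add: field_simps)
        have "xx \<le> (t^3 * cc)^n0" unfolding xx_def using t n05 by (intro xx_bound) auto
        also have "\<dots> = (\<Prod>i<n0. 2 * h * e)" using q by simp
        also have "\<dots> \<le> (\<Prod>i<n0. measure NN {c i - h..c i + h})"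
        proof (intro prod_mono conjI)
          fix i assume "i \<in> {..<n0}"
          then show "2 * h * e \<le> measure NN {c i - h..c i + h}"
            unfolding e_def using interval_lower[of "c i" M h] c hpos h1 by auto
          show "0 \<le> 2 * h * e" using hpos epos by simp
        qed
        finally show ?thesis .
      qed
      let ?K = "{..B} \<times> {..<n0}"
      let ?P = "PiM ?K (\<lambda>_. NN)"
      interpret P: prob_space ?P by (rule prob_PiM)
      define Bad1 where "Bad1 i = {\<omega> \<in> space ?P. M < \<bar>\<omega> (0, i)\<bar>}" for i
      define Bad2 where "Bad2 = {\<omega> \<in> space ?P. \<bar>\<omega> (0, i0) - \<omega> (0, j0)\<bar> < s}"
      define GG where "GG = GA n0 B M s h i0 j0"
      define miss where "miss = miss_event n0 n g k0 \<beta>0 \<sigma>0 lam B"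
      have c: "(\<lambda>\<omega>. \<omega> (b, i)) \<in> borel_measurable ?P" if "b \<le> B" "i < n0" for b i
        using that by (intro comp_meas) auto
      have B1s: "Bad1 i \<in> sets ?P" if "i < n0" for i
      proof -
        have "Measurable.pred ?P (\<lambda>\<omega>. M < \<bar>\<omega> (0, i)\<bar>)"
          unfolding pred_def using that
          by (intro borel_measurable_less borel_measurable_abs c borel_measurable_const) auto
        then show ?thesis unfolding Bad1_def pred_def .
      qed
      have B2s: "Bad2 \<in> sets ?P"
      proof -
        have "Measurable.pred ?P (\<lambda>\<omega>. \<bar>\<omega> (0, i0) - \<omega> (0, j0)\<bar> < s)"
          unfolding pred_def using ij
          by (intro borel_measurable_less borel_measurable_abs borel_measurable_diff c borel_measurable_const) auto
        then show ?thesis unfolding Bad2_def pred_def .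
      qed
      have GGs: "GG \<in> sets ?P" unfolding GG_def by (rule GA_sets[OF ij(1,2)])
      have U1s: "(\<Union>i<n0. Bad1 i) \<in> sets ?P" using B1s by auto
      have sub: "miss \<subseteq> (\<Union>i<n0. Bad1 i) \<union> Bad2 \<union> GG"
      proof
        fix \<omega> assume w: "\<omega> \<in> miss"
        then have ws: "\<omega> \<in> space ?P" unfolding miss_def miss_event_def gauss_eq by auto
        have nk: "\<forall>b\<in>{1..B}. khat n0 n g lam (Yobs n0 g k0 \<beta>0 \<sigma>0 \<omega>) (\<lambda>i. \<omega> (b, i)) \<noteq> k0"
          using w unfolding miss_def miss_event_def by (auto simp: image_iff)
        show "\<omega> \<in> (\<Union>i<n0. Bad1 i) \<union> Bad2 \<union> GG"
        proof (cases "(\<forall>i<n0. \<bar>\<omega> (0, i)\<bar> \<le> M) \<and> s \<le> \<bar>\<omega> (0, i0) - \<omega> (0, j0)\<bar>")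
          case False
          then show ?thesis using ws unfolding Bad1_def Bad2_def by (auto simp: not_le)
        next
          case True
          have "\<not> (\<forall>i<n0. \<bar>\<omega> (b, i) - \<omega> (0, i)\<bar> \<le> h)" if b: "b \<in> {1..B}" for b
          proof
            assume V: "\<forall>i<n0. \<bar>\<omega> (b, i) - \<omega> (0, i)\<bar> \<le> h"
            have "khat n0 n g lam (\<lambda>i. Xmul g k0 \<beta>0 i + \<sigma>0 * \<omega> (0, i)) (\<lambda>i. \<omega> (b, i)) = k0"
              using det_khat[OF k0n n01 ij gij s0 t(1) t(2) lamlo lamhi M(1), of "\<lambda>i. \<omega> (0, i)" s "\<lambda>i. \<omega> (b, i)"]
                True tR V unfolding h_def by auto
            moreover have "Yobs n0 g k0 \<beta>0 \<sigma>0 \<omega> = (\<lambda>i. Xmul g k0 \<beta>0 i + \<sigma>0 * \<omega> (0, i))"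
              unfolding Yobs_def by (rule ext) simp
            ultimately show False using nk b by simp
          qed
          then have "\<omega> \<in> GG" using True ws unfolding GG_def GA_def by auto
          then show ?thesis by simp
        qed
      qed
      have "measure ?P miss \<le> measure ?P ((\<Union>i<n0. Bad1 i) \<union> Bad2 \<union> GG)"
        using sub U1s B2s GGs by (intro P.finite_measure_mono) auto
      also have "\<dots> \<le> measure ?P ((\<Union>i<n0. Bad1 i) \<union> Bad2) + measure ?P GG"
        using U1s B2s GGs by (intro measure_Un_le) auto
      also have "\<dots> \<le> measure ?P (\<Union>i<n0. Bad1 i) + measure ?P Bad2 + measure ?P GG"
        using U1s B2s measure_Un_le[of "\<Union>i<n0. Bad1 i" ?P Bad2] by linarith
      also have "\<dots> \<le> \<delta>/2 + \<delta>/4 + (1 - xx)^B"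
      proof (intro add_mono)
        have "measure ?P (\<Union>i<n0. Bad1 i) \<le> (\<Sum>i<n0. measure ?P (Bad1 i))"
          using B1s by (intro P.finite_measure_subadditive_finite) auto
        also have "\<dots> = (\<Sum>i<n0. measure NN {x. M < \<bar>x\<bar>})"
          unfolding Bad1_def by (intro sum.cong refl bad1) auto
        also have "\<dots> = real n0 * measure NN {x. M < \<bar>x\<bar>}" by simp
        also have "\<dots> \<le> real n0 * (\<delta> / (2 * real n0))" using M(2) by (intro mult_left_mono) auto
        also have "\<dots> = \<delta>/2" using n01 by simp
        finally show "measure ?P (\<Union>i<n0. Bad1 i) \<le> \<delta>/2" .
        have "emeasure ?P Bad2 \<le> ennreal s" unfolding Bad2_def using ij spos by (intro bad2) auto
        then have "measure ?P Bad2 \<le> s" using spos by (simp add: P.emeasure_eq_measure ennreal_le_iff)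
        then show "measure ?P Bad2 \<le> \<delta>/4" unfolding s_def .
        have "emeasure ?P GG \<le> ennreal ((1 - xx)^B)" unfolding GG_def
          using miss2[OF hpos xx0 _ ij(1,2) hyp] M(1) by simp
        moreover have "0 \<le> (1 - xx)^B"
        proof -
          have "xx \<le> (\<Prod>i<n0. measure NN {0 - h..0 + h})" using hyp[of "\<lambda>_. 0"] M(1) by simp
          also have "\<dots> \<le> 1" by (intro prod_le_1) (auto simp: NNp.prob_le_1)
          finally show ?thesis by simp
        qed
        ultimately show "measure ?P GG \<le> (1 - xx)^B" by (simp add: P.emeasure_eq_measure ennreal_le_iff)
      qed
      finally show "measure (gauss_space n0 B) (miss_event n0 n g k0 \<beta>0 \<sigma>0 lam B)
             \<le> (1 - (t^8)^(n0 - 1) / real (n0 - 1))^B + \<delta>"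
        unfolding miss_def gauss_eq xx_def using \<delta> by simp
    qed
  qed
qed

end
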